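(* Let $t$ be a node of the ontology tree and let $O_i,O_j$ be objects all of whose terms lie in the subtree rooted at $t$. Suppose each of $O_i$ and $O_j$ has multiple span at $t$, i.e. for each of the two objects there are at least two distinct children of $t$ whose subtrees contain a term of that object. Let $n_i=|O_i|$, $n_j=|O_j|$, $w_i=\sum_{a\in O_i} d(a,t)$ and $w_j=\sum_{b\in O_j} d(b,t)$. Then $$d_{avg}(O_i,O_j)\ \ge\ \frac{w_i+w_j}{n_i\,n_j}.$$
   Context: An ontology is a finite rooted tree whose nodes are called terms; each edge carries a nonnegative weight. The distance $d(t_i,t_j)$ between two terms is the sum of the edge weights along the unique path between them. An object is a nonempty finite set of terms; $|O|$ is its number of terms. The average pairwise distance is $d_{avg}(X,Y)=\frac{1}{|X|\,|Y|}\sum_{x\in X,\,y\in Y} d(x,y)$. The span of an object at node $t$ is the number of child subtrees of $t$ containing at least one of its terms; it is single if this number is 1 and multiple if it is at least 2. *)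

theory Defs
  imports Complex_Main
begin

text \<open>Each non-root node c carries the weight w c of
  the edge between c and its parent par c.\<close>

definition ontology :: "'a set \<Rightarrow> 'a \<Rightarrow> ('a \<Rightarrow> 'a) \<Rightarrow> ('a \<Rightarrow> real) \<Rightarrow> bool" where
  "ontology V r par w \<longleftrightarrow> finite V \<and> r \<in> V \<and> par r = r \<and>
     (\<forall>x\<in>V. par x \<in> V) \<and> (\<forall>x\<in>V. \<exists>k. (par ^^ k) x = r) \<and>
     (\<forall>x\<in>V. w x \<ge> 0)"

definition anc :: "('a \<Rightarrow> 'a) \<Rightarrow> 'a \<Rightarrow> 'a set" where
  "anc par x = {(par ^^ k) x | k. True}"

text \<open>Edges on the path from x up to the root r, each edge identified by its lower
  (child) endpoint.\<close>
definition up_edges :: "'a \<Rightarrow> ('a \<Rightarrow> 'a) \<Rightarrow> 'a \<Rightarrow> 'a set" where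
  "up_edges r par x = anc par x - {r}"

text \<open>Distance: sum of the weights of the edges on the unique path between x and y,
  whose edge set is the symmetric difference of the two root paths.\<close>
definition tdist :: "'a \<Rightarrow> ('a \<Rightarrow> 'a) \<Rightarrow> ('a \<Rightarrow> real) \<Rightarrow> 'a \<Rightarrow> 'a \<Rightarrow> real" where
  "tdist r par w x y =
     sum w ((up_edges r par x - up_edges r par y) \<union> (up_edges r par y - up_edges r par x))"

definition subtree :: "'a set \<Rightarrow> ('a \<Rightarrow> 'a) \<Rightarrow> 'a \<Rightarrow> 'a set" where
  "subtree V par t = {x \<in> V. t \<in> anc par x}"

definition children :: "'a set \<Rightarrow> 'a \<Rightarrow> ('a \<Rightarrow> 'a) \<Rightarrow> 'a \<Rightarrow> 'a set" where
  "children V r par t = {c \<in> V. c \<noteq> r \<and> par c = t}"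

definition span :: "'a set \<Rightarrow> 'a \<Rightarrow> ('a \<Rightarrow> 'a) \<Rightarrow> 'a \<Rightarrow> 'a set \<Rightarrow> nat" where
  "span V r par t Ob = card {c \<in> children V r par t. \<exists>x\<in>Ob. x \<in> subtree V par c}"

definition is_object :: "'a set \<Rightarrow> 'a set \<Rightarrow> bool" where
  "is_object V Ob \<longleftrightarrow> Ob \<subseteq> V \<and> finite Ob \<and> Ob \<noteq> {}"

definition davg :: "'a \<Rightarrow> ('a \<Rightarrow> 'a) \<Rightarrow> ('a \<Rightarrow> real) \<Rightarrow> 'a set \<Rightarrow> 'a set \<Rightarrow> real" where
  "davg r par w X Y =
     (\<Sum>x\<in>X. \<Sum>y\<in>Y. tdist r par w x y) / (real (card X) * real (card Y))"

end

theory Submission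
  imports Defs
begin

lemma funpow_in_V:
  assumes "ontology V r par w" "x \<in> V" shows "(par ^^ k) x \<in> V"
  using assms by (induction k) (auto simp: ontology_def)

lemma anc_in_V:
  assumes "ontology V r par w" "x \<in> V" shows "anc par x \<subseteq> V"
  using funpow_in_V[OF assms] by (auto simp: anc_def)

lemma anc_self: "x \<in> anc par x"
  unfolding anc_def by (auto intro: exI[of _ 0])

lemma anc_trans:
  assumes "a \<in> anc par b" "b \<in> anc par x" shows "a \<in> anc par x"
proof -
  obtain i where i: "a = (par ^^ i) b" using assms(1) by (auto simp: anc_def)
  obtain j where j: "b = (par ^^ j) x" using assms(2) by (auto simp: anc_def)
  have "a = (par ^^ (i + j)) x" using i j by (simp add: funpow_add)
  thus ?thesis by (auto simp: anc_def)
qed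

lemma anc_chain:
  assumes "a \<in> anc par x" "b \<in> anc par x" shows "a \<in> anc par b \<or> b \<in> anc par a"
proof -
  obtain i where i: "a = (par ^^ i) x" using assms(1) by (auto simp: anc_def)
  obtain j where j: "b = (par ^^ j) x" using assms(2) by (auto simp: anc_def)
  show ?thesis
  proof (cases "j \<le> i")
    case True
    then have "a = (par ^^ (i - j)) b" using i j
      by (metis funpow_add le_add_diff_inverse2 comp_apply)
    thus ?thesis by (auto simp: anc_def)
  next
    case False
    then have "b = (par ^^ (j - i)) a" using i j
      by (metis funpow_add le_add_diff_inverse2 comp_apply nat_le_linear)
    thus ?thesis by (auto simp: anc_def)
  qed
qed

lemma anc_par: "anc par c = insert c (anc par (par c))"
proof
  show "anc par c \<subseteq> insert c (anc par (par c))"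
  proof
    fix z assume "z \<in> anc par c"
    then obtain k where k: "z = (par ^^ k) c" by (auto simp: anc_def)
    show "z \<in> insert c (anc par (par c))"
    proof (cases k)
      case 0 thus ?thesis using k by simp
    next
      case (Suc n)
      then have "z = (par ^^ n) (par c)" using k by (simp del: funpow.simps add: funpow_Suc_right)
      thus ?thesis by (auto simp: anc_def)
    qed
  qed
next
  show "insert c (anc par (par c)) \<subseteq> anc par c"
  proof
    fix z assume "z \<in> insert c (anc par (par c))"
    then show "z \<in> anc par c"
    proof
      assume "z = c" thus ?thesis using anc_self by metis
    next
      assume "z \<in> anc par (par c)"
      then obtain k where "z = (par ^^ k) (par c)" by (auto simp: anc_def)
      then have "z = (par ^^ Suc k) c" by (simp del: funpow.simps add: funpow_Suc_right)
      thus ?thesis unfolding anc_def by blast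
    qed
  qed
qed

lemma no_cycle:
  assumes ont: "ontology V r par w" and c: "c \<in> V" "c \<noteq> r"
    and cyc: "c \<in> anc par (par c)"
  shows False
proof -
  obtain k where k: "c = (par ^^ k) (par c)" using cyc by (auto simp: anc_def)
  hence k': "(par ^^ Suc k) c = c" by (simp del: funpow.simps add: funpow_Suc_right)
  have per: "(par ^^ (n * Suc k)) c = c" for n
  proof (induction n)
    case 0 thus ?case by simp
  next
    case (Suc n)
    have "Suc n * Suc k = n * Suc k + Suc k" by simp
    hence "(par ^^ (Suc n * Suc k)) c = (par ^^ (n * Suc k)) ((par ^^ Suc k) c)"
      by (simp only: funpow_add comp_apply)
    thus ?case using Suc k' by simp
  qed
  obtain K where K: "(par ^^ K) c = r" using ont c by (auto simp: ontology_def)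
  have rr: "(par ^^ j) r = r" for j using ont by (induction j) (auto simp: ontology_def)
  have "(par ^^ (K * Suc k)) c = (par ^^ (K * Suc k - K)) ((par ^^ K) c)"
    by (metis funpow_add comp_apply le_add_diff_inverse2 mult_le_mono2
        mult.right_neutral Suc_le_mono le0 One_nat_def)
  also have "\<dots> = r" using K rr by simp
  finally show False using per[of K] c by simp
qed

lemma sym_diff_sum:
  fixes w :: "'a \<Rightarrow> real"
  assumes "finite A" "finite B"
  shows "sum w ((A - B) \<union> (B - A)) = sum w A + sum w B - 2 * sum w (A \<inter> B)"
proof -
  have "sum w ((A - B) \<union> (B - A)) = sum w (A - B) + sum w (B - A)"
    by (rule sum.union_disjoint) (use assms in auto)
  moreover have "sum w A = sum w (A \<inter> B) + sum w (A - B)"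
    using assms by (simp add: sum.Int_Diff)
  moreover have "sum w B = sum w (B \<inter> A) + sum w (B - A)"
    using assms by (simp add: sum.Int_Diff)
  moreover have "B \<inter> A = A \<inter> B" by blast
  ultimately show ?thesis by simp
qed

lemma card_ge2_obtain:
  assumes "card S \<ge> 2" obtains a b where "a \<in> S" "b \<in> S" "a \<noteq> b"
proof -
  have "finite S" using assms card.infinite by fastforce
  have "\<exists>a b. a \<in> S \<and> b \<in> S \<and> a \<noteq> b"
  proof (rule ccontr)
    assume "\<not> ?thesis"
    then have "card S \<le> 1" using \<open>finite S\<close> by (metis card_le_Suc0_iff_eq One_nat_def)
    thus False using assms by simp
  qed
  thus ?thesis using that by blast
qed

context
  fixes V :: "'a set" and r t :: 'a and par :: "'a \<Rightarrow> 'a" and w :: "'a \<Rightarrow> real"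
  assumes ont: "ontology V r par w" and tV: "t \<in> V"
begin

abbreviation "U x \<equiv> up_edges r par x"
abbreviation "P x \<equiv> U x - U t"

lemma U_fin: "x \<in> V \<Longrightarrow> finite (U x)"
proof -
  assume "x \<in> V"
  then have "anc par x \<subseteq> V" by (rule anc_in_V[OF ont])
  moreover have "finite V" using ont by (simp add: ontology_def)
  ultimately have "finite (anc par x)" by (rule finite_subset)
  thus ?thesis unfolding up_edges_def by simp
qed

lemma U_sub: "x \<in> V \<Longrightarrow> U x \<subseteq> V"
  using anc_in_V[OF ont] unfolding up_edges_def by blast

lemma Ut_sub: "x \<in> subtree V par t \<Longrightarrow> U t \<subseteq> U x"
  unfolding subtree_def up_edges_def by (auto intro: anc_trans)

lemma dist_eq:
  assumes "x \<in> subtree V par t" "y \<in> subtree V par t"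
  shows "tdist r par w x y = sum w (P x) + sum w (P y) - 2 * sum w (P x \<inter> P y)"
proof -
  have xV: "x \<in> V" and yV: "y \<in> V" using assms by (auto simp: subtree_def)
  have "U x - U y = P x - P y" "U y - U x = P y - P x"
    using Ut_sub[OF assms(1)] Ut_sub[OF assms(2)] by blast+
  thus ?thesis unfolding tdist_def
    using sym_diff_sum[of "P x" "P y" w] U_fin[OF xV] U_fin[OF yV] by simp
qed

lemma dist_t:
  assumes "x \<in> subtree V par t"
  shows "tdist r par w x t = sum w (P x)"
proof -
  have "U t - U x = {}" using Ut_sub[OF assms] by blast
  thus ?thesis unfolding tdist_def by (simp only: Un_empty_right)
qed

lemma m_le:
  assumes "x \<in> subtree V par t"
  shows "sum w (P x \<inter> P y) \<le> sum w (P x)"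
proof (rule sum_mono2)
  have xV: "x \<in> V" using assms by (auto simp: subtree_def)
  show "finite (P x)" using U_fin[OF xV] by simp
  show "P x \<inter> P y \<subseteq> P x" by blast
  fix b assume "b \<in> P x - P x \<inter> P y"
  then show "0 \<le> w b" using U_sub[OF xV] ont
    by (auto simp: ontology_def)
qed

lemma disj:
  assumes c: "c \<in> children V r par t" and cy: "c \<in> anc par y" and cx: "c \<notin> anc par x"
  shows "P x \<inter> P y = {}"
proof (rule ccontr)
  assume "P x \<inter> P y \<noteq> {}"
  then obtain z where z1: "z \<in> P x" and z2: "z \<in> P y" by blast
  have zx: "z \<in> anc par x" and zy: "z \<in> anc par y" and zt: "z \<notin> anc par t"
    using z1 z2 unfolding up_edges_def by auto
  have pc: "par c = t" using c by (auto simp: children_def)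
  from anc_chain[OF zy cy] show False
  proof
    assume "z \<in> anc par c"
    then have "z = c \<or> z \<in> anc par t" using anc_par[of par c] pc by auto
    thus False using zt zx cx by auto
  next
    assume "c \<in> anc par z"
    thus False using anc_trans[OF _ zx] cx by blast
  qed
qed

lemma far:
  assumes sp: "span V r par t Oj \<ge> 2" and x: "x \<in> subtree V par t"
  shows "\<exists>y\<in>Oj. P x \<inter> P y = {}"
proof -
  obtain c1 c2 where c1: "c1 \<in> children V r par t" "\<exists>y\<in>Oj. y \<in> subtree V par c1"
    and c2: "c2 \<in> children V r par t" "\<exists>y\<in>Oj. y \<in> subtree V par c2" and ne: "c1 \<noteq> c2"
  proof -
    from card_ge2_obtain[OF sp[unfolded span_def]] obtain a b where
      "a \<in> {c \<in> children V r par t. \<exists>x\<in>Oj. x \<in> subtree V par c}"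
      "b \<in> {c \<in> children V r par t. \<exists>x\<in>Oj. x \<in> subtree V par c}" "a \<noteq> b" .
    then show ?thesis apply simp apply (elim conjE) apply (rule that) by assumption+
  qed
  obtain y1 where y1: "y1 \<in> Oj" "c1 \<in> anc par y1" using c1 by (auto simp: subtree_def)
  obtain y2 where y2: "y2 \<in> Oj" "c2 \<in> anc par y2" using c2 by (auto simp: subtree_def)
  show ?thesis
  proof (cases "c2 \<in> anc par x")
    case False thus ?thesis using disj[OF c2(1) y2(2)] y2(1) by blast
  next
    case True note T2 = True
    show ?thesis
    proof (cases "c1 \<in> anc par x")
      case False thus ?thesis using disj[OF c1(1) y1(2)] y1(1) by blast
    next
      case True
      have p1: "par c1 = t" "c1 \<in> V" "c1 \<noteq> r" using c1 by (auto simp: children_def)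
      have p2: "par c2 = t" "c2 \<in> V" "c2 \<noteq> r" using c2 by (auto simp: children_def)
      from anc_chain[OF True T2] show ?thesis
      proof
        assume "c1 \<in> anc par c2"
        then have "c1 \<in> anc par (par c1)" using anc_par[of par c2] p1 p2 ne by auto
        thus ?thesis using no_cycle[OF ont p1(2,3)] by blast
      next
        assume "c2 \<in> anc par c1"
        then have "c2 \<in> anc par (par c2)" using anc_par[of par c1] p1 p2 ne by auto
        thus ?thesis using no_cycle[OF ont p2(2,3)] by blast
      qed
    qed
  qed
qed

end


theorem mainTheorem4:
  fixes V :: "'a set" and r t :: 'a and par :: "'a \<Rightarrow> 'a" and w :: "'a \<Rightarrow> real"
    and Oi Oj :: "'a set"
  assumes "ontology V r par w"
    and "t \<in> V"
    and "is_object V Oi" and "is_object V Oj"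
    and "Oi \<subseteq> subtree V par t" and "Oj \<subseteq> subtree V par t"
    and "span V r par t Oi \<ge> 2" and "span V r par t Oj \<ge> 2"
  shows "davg r par w Oi Oj \<ge>
     ((\<Sum>a\<in>Oi. tdist r par w a t) + (\<Sum>b\<in>Oj. tdist r par w b t))
       / (real (card Oi) * real (card Oj))"
proof -
  note ont = assms(1) and tV = assms(2)
  define P where "P x = up_edges r par x - up_edges r par t" for x
  define D where "D x = sum w (P x)" for x
  define m where "m x y = sum w (P x \<inter> P y)" for x y
  have fi: "finite Oi" "Oi \<noteq> {}" and fj: "finite Oj" "Oj \<noteq> {}"
    using assms(3,4) by (auto simp: is_object_def)
  define ni where "ni = card Oi"
  define nj where "nj = card Oj"
  have ni1: "ni \<ge> 1" and nj1: "nj \<ge> 1" using fi fj ni_def nj_def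
    by (auto simp: Suc_le_eq card_gt_0_iff)
  have sx: "x \<in> subtree V par t" if "x \<in> Oi" for x using that assms(5) by blast
  have sy: "y \<in> subtree V par t" if "y \<in> Oj" for y using that assms(6) by blast
  have S: "(\<Sum>x\<in>Oi. \<Sum>y\<in>Oj. tdist r par w x y) = (\<Sum>x\<in>Oi. \<Sum>y\<in>Oj. D x + D y - 2 * m x y)"
    by (intro sum.cong refl) (simp add: dist_eq[OF ont tV sx sy] D_def m_def P_def)
  also have "\<dots> = real nj * (\<Sum>x\<in>Oi. D x) + real ni * (\<Sum>y\<in>Oj. D y)
      - 2 * (\<Sum>x\<in>Oi. \<Sum>y\<in>Oj. m x y)"
    by (simp add: sum.distrib sum_subtractf sum_distrib_left sum_distrib_right ni_def nj_def
        sum.swap[of _ Oi Oj] algebra_simps)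
  finally have S: "(\<Sum>x\<in>Oi. \<Sum>y\<in>Oj. tdist r par w x y) = real nj * (\<Sum>x\<in>Oi. D x)
      + real ni * (\<Sum>y\<in>Oj. D y) - 2 * (\<Sum>x\<in>Oi. \<Sum>y\<in>Oj. m x y)" .
  have A: "(\<Sum>y\<in>Oj. m x y) \<le> (real nj - 1) * D x" if x: "x \<in> Oi" for x
  proof -
    obtain y0 where y0: "y0 \<in> Oj" "P x \<inter> P y0 = {}"
      using far[OF ont tV assms(8) sx[OF x]] unfolding P_def by blast
    have "(\<Sum>y\<in>Oj. m x y) = m x y0 + (\<Sum>y\<in>Oj - {y0}. m x y)"
      using y0 fj by (simp add: sum.remove)
    also have "m x y0 = 0" using y0 by (simp add: m_def)
    also have "(\<Sum>y\<in>Oj - {y0}. m x y) \<le> real (card (Oj - {y0})) * D x"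
      by (rule sum_bounded_above) (use m_le[OF ont tV sx[OF x]] in \<open>simp add: m_def D_def P_def\<close>)
    also have "real (card (Oj - {y0})) = real nj - 1"
      using y0 fj nj1 by (simp add: nj_def of_nat_diff)
    finally show ?thesis by simp
  qed
  have B: "(\<Sum>x\<in>Oi. m x y) \<le> (real ni - 1) * D y" if y: "y \<in> Oj" for y
  proof -
    obtain x0 where x0: "x0 \<in> Oi" "P y \<inter> P x0 = {}"
      using far[OF ont tV assms(7) sy[OF y]] unfolding P_def by blast
    have "(\<Sum>x\<in>Oi. m x y) = m x0 y + (\<Sum>x\<in>Oi - {x0}. m x y)"
      using x0 fi by (simp add: sum.remove)
    also have "m x0 y = 0" using x0 by (simp add: m_def Int_commute)
    also have "(\<Sum>x\<in>Oi - {x0}. m x y) \<le> real (card (Oi - {x0})) * D y"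
      by (rule sum_bounded_above) (use m_le[OF ont tV sy[OF y]] in \<open>simp add: m_def D_def P_def Int_commute\<close>)
    also have "real (card (Oi - {x0})) = real ni - 1"
      using x0 fi ni1 by (simp add: ni_def of_nat_diff)
    finally show ?thesis by simp
  qed
  have A': "(\<Sum>x\<in>Oi. \<Sum>y\<in>Oj. m x y) \<le> (real nj - 1) * (\<Sum>x\<in>Oi. D x)"
    using sum_mono[OF A] by (simp add: sum_distrib_left)
  have B': "(\<Sum>x\<in>Oi. \<Sum>y\<in>Oj. m x y) \<le> (real ni - 1) * (\<Sum>y\<in>Oj. D y)"
  proof -
    have "(\<Sum>x\<in>Oi. \<Sum>y\<in>Oj. m x y) = (\<Sum>y\<in>Oj. \<Sum>x\<in>Oi. m x y)" by (rule sum.swap)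
    also have "\<dots> \<le> (\<Sum>y\<in>Oj. (real ni - 1) * D y)" by (rule sum_mono) (rule B)
    also have "\<dots> = (real ni - 1) * (\<Sum>y\<in>Oj. D y)" by (simp add: sum_distrib_left)
    finally show ?thesis .
  qed
  have T: "(\<Sum>a\<in>Oi. tdist r par w a t) + (\<Sum>b\<in>Oj. tdist r par w b t)
      = (\<Sum>x\<in>Oi. D x) + (\<Sum>y\<in>Oj. D y)"
    using dist_t[OF ont tV sx] dist_t[OF ont tV sy] by (simp add: D_def P_def)
  have main: "(\<Sum>a\<in>Oi. tdist r par w a t) + (\<Sum>b\<in>Oj. tdist r par w b t)
      \<le> (\<Sum>x\<in>Oi. \<Sum>y\<in>Oj. tdist r par w x y)"
    unfolding T S using A' B' by (simp add: algebra_simps)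
  have pos: "real (card Oi) * real (card Oj) > 0" using ni1 nj1 ni_def nj_def by simp
  show ?thesis unfolding davg_def
    by (rule divide_right_mono[OF main]) (use pos in simp)
qed

end
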